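(* In the Majority Model (MM) on the cycle $C_n=(v_0,\dots,v_{n-1})$, the number of stable colorings is $\Theta(\Phi^n)$, where $\Phi=\frac{1+\sqrt5}{2}$ is the golden ratio.
   Context: A coloring is a map from the nodes to $\{b,w\}$. In MM, all nodes update simultaneously: a node adopts the color strictly more frequent among its neighbors in the previous round and keeps its color in case of a tie. A coloring is stable if one application of the MM update rule returns the same coloring. *)

theory Defs
  imports Complex_Main "HOL-Library.FuncSet" "HOL-Library.Landau_Symbols"
begin

datatype color = B | W

definition mm_step :: "('v \<Rightarrow> 'v set) \<Rightarrow> ('v \<Rightarrow> color) \<Rightarrow> 'v \<Rightarrow> color" where
  "mm_step N c v =
     (let nb = card {u \<in> N v. c u = B}; nw = card {u \<in> N v. c u = W}
      in if nb > nw then B else if nw > nb then W else c v)"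

definition mm_stable :: "'v set \<Rightarrow> ('v \<Rightarrow> 'v set) \<Rightarrow> ('v \<Rightarrow> color) \<Rightarrow> bool" where
  "mm_stable V N c \<longleftrightarrow> (\<forall>v\<in>V. mm_step N c v = c v)"

definition cycle_nbrs :: "nat \<Rightarrow> nat \<Rightarrow> nat set" where
  "cycle_nbrs n i = {(i + 1) mod n, (i + n - 1) mod n}"

definition num_stable_cycle :: "nat \<Rightarrow> nat" where
  "num_stable_cycle n =
     card {c \<in> {0..<n} \<rightarrow>\<^sub>E (UNIV :: color set). mm_stable {0..<n} (cycle_nbrs n) c}"

end

theory Submission
  imports Defs
begin

lemma UNIV_color: "(UNIV :: color set) = {B, W}"
  using color.exhaust by auto

lemma finite_color: "finite (UNIV :: color set)"
  by (simp add: UNIV_color)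

lemma card_color: "card (UNIV :: color set) = 2"
  by (simp add: UNIV_color)

fun ok :: "color list \<Rightarrow> bool" where
  "ok (a # b # c # r) = ((a = b \<or> b = c) \<and> ok (b # c # r))"
| "ok _ = True"

lemma ok_nth: "ok xs \<longleftrightarrow> (\<forall>i. i + 2 < length xs \<longrightarrow> xs ! i = xs ! (i+1) \<or> xs ! (i+1) = xs ! (i+2))"
proof (induction xs rule: ok.induct)
  case (1 a b c r)
  show ?case
  proof
    assume h: "ok (a # b # c # r)"
    show "\<forall>i. i + 2 < length (a # b # c # r) \<longrightarrow> (a # b # c # r) ! i = (a # b # c # r) ! (i+1) \<or> (a # b # c # r) ! (i+1) = (a # b # c # r) ! (i+2)"
    proof (intro allI impI)
      fix i assume "i + 2 < length (a # b # c # r)"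
      then show "(a # b # c # r) ! i = (a # b # c # r) ! (i+1) \<or> (a # b # c # r) ! (i+1) = (a # b # c # r) ! (i+2)"
        using h 1 by (cases i) auto
    qed
  next
    assume h: "\<forall>i. i + 2 < length (a # b # c # r) \<longrightarrow> (a # b # c # r) ! i = (a # b # c # r) ! (i+1) \<or> (a # b # c # r) ! (i+1) = (a # b # c # r) ! (i+2)"
    have "a = b \<or> b = c" using h[rule_format, of 0] by simp
    moreover have "ok (b # c # r)" unfolding 1
    proof (intro allI impI)
      fix i assume "i + 2 < length (b # c # r)"
      then show "(b # c # r) ! i = (b # c # r) ! (i+1) \<or> (b # c # r) ! (i+1) = (b # c # r) ! (i+2)"
        using h[rule_format, of "Suc i"] by simp
    qed
    ultimately show "ok (a # b # c # r)" by simp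
  qed
qed auto

definition other :: "color \<Rightarrow> color" where "other x = (if x = B then W else B)"

lemma other_neq[simp]: "other x \<noteq> x" "x \<noteq> other x"
  by (cases x; simp add: other_def)+

definition T :: "nat \<Rightarrow> color list set" where
  "T n = {xs. length xs = n \<and> ok xs}"

definition G :: "nat \<Rightarrow> color list set" where
  "G n = {xs. length xs = n \<and> ok xs \<and> xs ! 0 = xs ! 1 \<and> xs ! (n-1) = xs ! (n-2)}"

lemma finite_T: "finite (T n)"
  by (rule finite_subset[OF _ finite_lists_length_eq[OF finite_color, of n]]) (auto simp: T_def)

lemma card_T_le: "card (T n) \<le> 2 ^ n"
proof -
  have "card (T n) \<le> card {xs. set xs \<subseteq> (UNIV::color set) \<and> length xs = n}"
    by (rule card_mono[OF finite_lists_length_eq[OF finite_color]]) (auto simp: T_def)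
  moreover have "card {xs::color list. length xs = n} = 2^n"
    using card_lists_length_eq[OF finite_color, of n] by (simp add: card_color)
  ultimately show ?thesis by simp
qed

lemma G_sub_T: "G n \<subseteq> T n" by (auto simp: G_def T_def)

lemma finite_G: "finite (G n)" using finite_subset[OF G_sub_T finite_T] .

lemma T_rec: "T (n+3) \<subseteq> (\<lambda>xs. hd xs # xs) ` T (n+2) \<union> (\<lambda>xs. other (hd xs) # hd xs # xs) ` T (n+1)"
proof
  fix zs assume "zs \<in> T (n+3)"
  then obtain a b c r where zs: "zs = a # b # c # r" and len: "length r = n" and okz: "ok zs"
    unfolding T_def by (cases zs rule: ok.cases) auto
  show "zs \<in> (\<lambda>xs. hd xs # xs) ` T (n+2) \<union> (\<lambda>xs. other (hd xs) # hd xs # xs) ` T (n+1)"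
  proof (cases "a = b")
    case True
    then have "zs = (\<lambda>xs. hd xs # xs) (b # c # r)" using zs by simp
    moreover have "b # c # r \<in> T (n+2)" using okz zs len by (simp add: T_def)
    ultimately show ?thesis by blast
  next
    case False
    then have bc: "b = c" using okz zs by simp
    have "a = other c" using False bc by (cases a; cases c; simp add: other_def)
    then have "zs = (\<lambda>xs. other (hd xs) # hd xs # xs) (c # r)" using zs bc by simp
    moreover have "c # r \<in> T (n+1)" using okz zs len by (cases r rule: ok.cases) (auto simp: T_def)
    ultimately show ?thesis by blast
  qed
qed

lemma card_T_rec: "card (T (n+3)) \<le> card (T (n+2)) + card (T (n+1))"
proof -
  have "card (T (n+3)) \<le> card ((\<lambda>xs. hd xs # xs) ` T (n+2) \<union> (\<lambda>xs. other (hd xs) # hd xs # xs) ` T (n+1))"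
    by (rule card_mono[OF _ T_rec]) (simp add: finite_T)
  also have "\<dots> \<le> card ((\<lambda>xs. hd xs # xs) ` T (n+2)) + card ((\<lambda>xs. other (hd xs) # hd xs # xs) ` T (n+1))"
    by (rule card_Un_le)
  also have "\<dots> \<le> card (T (n+2)) + card (T (n+1))"
    by (intro add_mono card_image_le finite_T)
  finally show ?thesis .
qed

lemma G_rec: "(\<lambda>xs. hd xs # xs) ` G (n+3) \<union> (\<lambda>xs. other (hd xs) # other (hd xs) # xs) ` G (n+2) \<subseteq> G (n+4)"
proof -
  have "hd xs # xs \<in> G (n+4)" if "xs \<in> G (n+3)" for xs
  proof -
    from that obtain a b c r where xs: "xs = a # b # c # r" and len: "length r = n"
      unfolding G_def by (cases xs rule: ok.cases) auto
    have okx: "ok xs" and ab: "xs ! 0 = xs ! 1" and hl: "xs ! (n+3-1) = xs ! (n+3-2)"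
      using that by (auto simp: G_def)
    have "ok (hd xs # xs)" using okx xs by simp
    moreover have "length (hd xs # xs) = n + 4" using xs len by simp
    moreover have "(hd xs # xs) ! 0 = (hd xs # xs) ! 1" using xs by simp
    moreover have "(hd xs # xs) ! (n+4-1) = xs ! (n+3-1)" by (simp add: numeral_eq_Suc)
    moreover have "(hd xs # xs) ! (n+4-2) = xs ! (n+3-2)" by (simp add: numeral_eq_Suc)
    ultimately show ?thesis using hl by (simp add: G_def)
  qed
  moreover have "other (hd xs) # other (hd xs) # xs \<in> G (n+4)" if "xs \<in> G (n+2)" for xs
  proof -
    from that obtain a b r where xs: "xs = a # b # r" and len: "length r = n"
      unfolding G_def by (cases xs rule: ok.cases) auto
    have okx: "ok xs" and ab: "xs ! 0 = xs ! 1" and hl: "xs ! (n+2-1) = xs ! (n+2-2)"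
      using that by (auto simp: G_def)
    have "ok (other (hd xs) # other (hd xs) # xs)" using okx xs ab by simp
    moreover have "length (other (hd xs) # other (hd xs) # xs) = n + 4" using xs len by simp
    moreover have "(other (hd xs) # other (hd xs) # xs) ! 0 = (other (hd xs) # other (hd xs) # xs) ! 1" by simp
    moreover have "(other (hd xs) # other (hd xs) # xs) ! (n+4-1) = xs ! (n+2-1)" by (simp add: numeral_eq_Suc)
    moreover have "(other (hd xs) # other (hd xs) # xs) ! (n+4-2) = xs ! (n+2-2)" by (simp add: numeral_eq_Suc)
    ultimately show ?thesis using hl by (simp add: G_def)
  qed
  ultimately show ?thesis by blast
qed

lemma card_G_rec: "card (G (n+4)) \<ge> card (G (n+3)) + card (G (n+2))"
proof -
  have d: "(\<lambda>xs. hd xs # xs) ` G (n+3) \<inter> (\<lambda>xs. other (hd xs) # other (hd xs) # xs) ` G (n+2) = {}"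
  proof -
    have "False" if "xs \<in> G (n+3)" "ys \<in> G(n+2)" "hd xs # xs = other (hd ys) # other (hd ys) # ys" for xs ys
    proof -
      from that(2) obtain a b r where ys: "ys = a # b # r" unfolding G_def by (cases ys rule: ok.cases) auto
      from that(1) obtain c d s where xs: "xs = c # d # s" unfolding G_def by (cases xs rule: ok.cases) auto
      have "c = d" using that(1) xs by (simp add: G_def)
      then show False using that(3) xs ys by (cases a) (auto simp: other_def)
    qed
    then show ?thesis by blast
  qed
  have inj1: "inj_on (\<lambda>xs::color list. hd xs # xs) A" for A by (rule inj_onI) simp
  have inj2: "inj_on (\<lambda>xs. other (hd xs) # other (hd xs) # xs) A" for A by (rule inj_onI) simp
  have "card (G (n+3)) + card (G (n+2)) = card ((\<lambda>xs. hd xs # xs) ` G (n+3)) + card ((\<lambda>xs. other (hd xs) # other (hd xs) # xs) ` G (n+2))"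
    using card_image[OF inj1, of "G (n+3)"] card_image[OF inj2, of "G (n+2)"] by simp
  also have "\<dots> = card ((\<lambda>xs. hd xs # xs) ` G (n+3) \<union> (\<lambda>xs. other (hd xs) # other (hd xs) # xs) ` G (n+2))"
    by (rule card_Un_disjoint[symmetric, OF finite_imageI[OF finite_G] finite_imageI[OF finite_G] d])
  also have "\<dots> \<le> card (G (n+4))"
    by (rule card_mono[OF finite_G G_rec])
  finally show ?thesis .
qed

lemma G_pos: "card (G 2) \<ge> 1" "card (G 3) \<ge> 1"
proof -
  have "[B,B] \<in> G 2" "[B,B,B] \<in> G 3" by (auto simp: G_def)
  then show "card (G 2) \<ge> 1" "card (G 3) \<ge> 1" using finite_G
    by (metis One_nat_def Suc_leI card_gt_0_iff empty_iff)+
qed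


lemma mod_succ: "(n::nat) \<ge> 3 \<Longrightarrow> i < n \<Longrightarrow> (i+1) mod n = (if i+1 = n then 0 else i+1)"
  by auto

lemma mod_pred:
  assumes "(n::nat) \<ge> 3" "i < n"
  shows "(i+n-1) mod n = (if i = 0 then n-1 else i-1)"
proof (cases i)
  case (Suc j)
  then have "i + n - 1 = j + n" by simp
  then show ?thesis using Suc assms(2) by simp
next
  case 0
  then show ?thesis using assms by simp
qed

lemma card_filter2: "p \<noteq> q \<Longrightarrow> card {u\<in>{p,q}. P u} = (if P p then 1 else 0) + (if P q then 1 else 0)"
proof -
  assume pq: "p \<noteq> q"
  have "{u\<in>{p,q}. P u} = (if P p then {p} else {}) \<union> (if P q then {q} else {})" by auto
  then show ?thesis using pq by simp
qed

lemma step_gen: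
  assumes pq: "p \<noteq> q" and N: "N v = {p,q}"
  shows "mm_step N c v = c v \<longleftrightarrow> (c p = c v \<or> c q = c v)"
proof -
  have hB: "card {u \<in> N v. c u = B} = (if c p = B then 1 else 0) + (if c q = B then 1 else 0)"
    unfolding N by (rule card_filter2[OF pq, of "\<lambda>u. c u = B"])
  have hW: "card {u \<in> N v. c u = W} = (if c p = W then 1 else 0) + (if c q = W then 1 else 0)"
    unfolding N by (rule card_filter2[OF pq, of "\<lambda>u. c u = W"])
  show ?thesis unfolding mm_step_def Let_def hB hW
    by (cases "c p"; cases "c q"; cases "c v") simp_all
qed

lemma stable_iff:
  assumes "n \<ge> 3"
  shows "mm_stable {0..<n} (cycle_nbrs n) c \<longleftrightarrow> (\<forall>i<n. c ((i+1) mod n) = c i \<or> c ((i+n-1) mod n) = c i)"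
proof -
  have "mm_step (cycle_nbrs n) c i = c i \<longleftrightarrow> (c ((i+1) mod n) = c i \<or> c ((i+n-1) mod n) = c i)" if "i < n" for i
  proof (rule step_gen)
    show "(i+1) mod n \<noteq> (i+n-1) mod n" using mod_succ[OF assms that] mod_pred[OF assms that] assms that by auto
  qed (simp add: cycle_nbrs_def)
  then show ?thesis unfolding mm_stable_def by auto
qed

definition S :: "nat \<Rightarrow> (nat \<Rightarrow> color) set" where
  "S n = {c \<in> {0..<n} \<rightarrow>\<^sub>E (UNIV :: color set). mm_stable {0..<n} (cycle_nbrs n) c}"

lemma finite_S: "finite (S n)"
  by (rule finite_subset[of _ "{0..<n} \<rightarrow>\<^sub>E (UNIV :: color set)"]) (auto simp: S_def finite_color intro!: finite_PiE)

lemma inj_phi: "inj_on (\<lambda>c. map c [0..<n]) (S n)"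
proof (rule inj_onI)
  fix c d assume c: "c \<in> S n" and d: "d \<in> S n" and eq: "map c [0..<n] = map d [0..<n]"
  from eq have "\<forall>x\<in>{0..<n}. c x = d x" by (simp add: map_eq_conv)
  then show "c = d" using c d by (intro extensionalityI[of _ "{0..<n}"]) (auto simp: S_def PiE_iff)
qed

lemma phi_T: assumes "n \<ge> 3" shows "(\<lambda>c. map c [0..<n]) ` S n \<subseteq> T n"
proof
  fix xs assume "xs \<in> (\<lambda>c. map c [0..<n]) ` S n"
  then obtain c where c: "c \<in> S n" and xs: "xs = map c [0..<n]" by blast
  have st: "\<forall>i<n. c ((i+1) mod n) = c i \<or> c ((i+n-1) mod n) = c i"
    using c stable_iff[OF assms] by (simp add: S_def)
  have "ok xs" unfolding ok_nth
  proof (intro allI impI)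
    fix i assume i: "i + 2 < length xs"
    then have i2: "i + 2 < n" using xs by simp
    have "c ((i+1+1) mod n) = c (i+1) \<or> c ((i+1+n-1) mod n) = c (i+1)" using st[rule_format, of "i+1"] i2 by linarith
    moreover have "(i+1+1) mod n = i+2" using i2 by simp
    moreover have "(i+1+n-1) mod n = i" using mod_pred[OF assms, of "i+1"] i2 by simp
    ultimately show "xs ! i = xs ! (i+1) \<or> xs ! (i+1) = xs ! (i+2)"
      using xs i2 by (auto simp: nth_map_upt)
  qed
  then show "xs \<in> T n" using xs by (simp add: T_def)
qed

lemma G_phi: assumes "n \<ge> 3" shows "G n \<subseteq> (\<lambda>c. map c [0..<n]) ` S n"
proof
  fix xs assume xsG: "xs \<in> G n"
  then have len: "length xs = n" and okx: "ok xs" and h0: "xs ! 0 = xs ! 1" and hl: "xs ! (n-1) = xs ! (n-2)"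
    by (auto simp: G_def)
  define c where "c = (\<lambda>i. if i < n then xs ! i else undefined)"
  have pie: "c \<in> {0..<n} \<rightarrow>\<^sub>E (UNIV :: color set)" by (auto simp: c_def PiE_iff extensional_def)
  have "\<forall>i<n. c ((i+1) mod n) = c i \<or> c ((i+n-1) mod n) = c i"
  proof (intro allI impI)
    fix i assume i: "i < n"
    show "c ((i+1) mod n) = c i \<or> c ((i+n-1) mod n) = c i"
    proof (cases "i = 0")
      case True then show ?thesis using h0 assms by (simp add: c_def)
    next
      case F: False
      show ?thesis
      proof (cases "i = n - 1")
        case True
        then have "(i+n-1) mod n = n - 2" using mod_pred[OF assms i] F by simp
        then show ?thesis using hl True assms by (simp add: c_def)
      next
        case False
        then have a: "(i+1) mod n = i+1" and b: "(i+n-1) mod n = i - 1"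
          using mod_pred[OF assms i] mod_succ[OF assms i] F by auto
        have "xs ! (i-1) = xs ! (i-1+1) \<or> xs ! (i-1+1) = xs ! (i-1+2)"
          using okx[unfolded ok_nth, rule_format, of "i-1"] False F i len by simp
        moreover have "i-1+1 = i" "i-1+2 = i+1" using F by auto
        ultimately show ?thesis using a b False F i by (auto simp: c_def)
      qed
    qed
  qed
  then have "c \<in> S n" using pie stable_iff[OF assms] by (simp add: S_def)
  moreover have "map c [0..<n] = xs"
    using len by (simp add: c_def list_eq_iff_nth_eq)
  ultimately show "xs \<in> (\<lambda>c. map c [0..<n]) ` S n" by force
qed

lemma num_eq: "num_stable_cycle n = card (S n)" by (simp add: num_stable_cycle_def S_def)

lemma num_upper: "n \<ge> 3 \<Longrightarrow> num_stable_cycle n \<le> card (T n)"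
  unfolding num_eq
  by (metis card_image card_mono finite_T inj_phi phi_T)

lemma num_lower: "n \<ge> 3 \<Longrightarrow> card (G n) \<le> num_stable_cycle n"
  unfolding num_eq
  by (metis G_phi card_image_le card_mono finite_S finite_imageI order_trans)


lemma phi_sq: "((1 + sqrt 5) / 2) ^ 2 = (1 + sqrt 5) / 2 + (1::real)"
  by (simp add: power2_eq_square field_simps)

lemma phi_gt1: "(1::real) < (1 + sqrt 5) / 2"
proof -
  have "1 < sqrt (5::real)" by simp
  then show ?thesis by simp
qed

definition PT :: "nat \<Rightarrow> bool" where
  "PT n \<longleftrightarrow> real (card (T n)) \<le> 4 * ((1 + sqrt 5) / 2) ^ n"

definition PG :: "nat \<Rightarrow> bool" where
  "PG n \<longleftrightarrow> real (card (G n)) \<ge> ((1 + sqrt 5) / 2) ^ n / ((1 + sqrt 5) / 2) ^ 3"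

lemma PT_base: "PT 1" "PT 2"
proof -
  define p :: real where "p = (1 + sqrt 5) / 2"
  have p1: "1 < p" using phi_gt1 by (simp add: p_def)
  have "real (card (T 1)) \<le> 2" using card_T_le[of 1] by simp
  then show "PT 1" using p1 unfolding PT_def p_def[symmetric] by simp
  have "real (card (T 2)) \<le> 4" using card_T_le[of 2] by simp
  moreover have "1 < p^2" using p1 by (simp add: one_less_power)
  ultimately show "PT 2" unfolding PT_def p_def[symmetric] by simp
qed

lemma PG_base: "PG 2" "PG 3"
proof -
  define p :: real where "p = (1 + sqrt 5) / 2"
  have p1: "1 < p" using phi_gt1 by (simp add: p_def)
  have "p^2 \<le> p^3" using p1 by (intro power_increasing) auto
  then have "p^2 / p^3 \<le> 1" using p1 by (simp add: divide_le_eq)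
  moreover have "real (card (G 2)) \<ge> 1" using G_pos by simp
  ultimately show "PG 2" unfolding PG_def p_def[symmetric] by linarith
  have "p^3 / p^3 = 1" using p1 by simp
  moreover have "real (card (G 3)) \<ge> 1" using G_pos by simp
  ultimately show "PG 3" unfolding PG_def p_def[symmetric] by linarith
qed

lemma T_upper: "PT (n+1) \<and> PT (n+2)"
proof (induction n)
  case 0
  show ?case unfolding add_0 using PT_base by blast
next
  case (Suc n)
  define p :: real where "p = (1 + sqrt 5) / 2"
  have sq: "p^2 = p + 1" using phi_sq by (simp add: p_def)
  have ih1: "real (card (T (n+1))) \<le> 4 * p^(n+1)" and ih2: "real (card (T (n+2))) \<le> 4 * p^(n+2)"
    using Suc.IH unfolding PT_def p_def by auto
  have "real (card (T (n+3))) \<le> real (card (T (n+2))) + real (card (T (n+1)))"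
    using card_T_rec[of n] by linarith
  also have "\<dots> \<le> 4 * p^(n+2) + 4 * p^(n+1)" using ih1 ih2 by simp
  also have "\<dots> = 4 * p^(n+1) * (p + 1)" by (simp add: algebra_simps)
  also have "\<dots> = 4 * (p^(n+1) * p^2)" by (simp add: sq)
  also have "p^(n+1) * p^2 = p^((n+1)+2)" by (rule power_add[symmetric])
  also have "(n+1)+2 = n+3" by simp
  finally have "PT (n+3)" unfolding PT_def p_def .
  moreover have e1: "Suc n + 1 = n + 2" by simp
  moreover have e2: "Suc n + 2 = n + 3" by simp
  ultimately show ?case using Suc.IH by (simp only: e1 e2)
qed

lemma G_lower: "PG (n+2) \<and> PG (n+3)"
proof (induction n)
  case 0
  show ?case unfolding add_0 using PG_base by blast
next
  case (Suc n)
  define p :: real where "p = (1 + sqrt 5) / 2"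
  have sq: "p^2 = p + 1" using phi_sq by (simp add: p_def)
  have ih1: "real (card (G (n+2))) \<ge> p^(n+2) / p^3" and ih2: "real (card (G (n+3))) \<ge> p^(n+3) / p^3"
    using Suc.IH unfolding PG_def p_def by auto
  have e: "(n+2)+2 = n+4" by simp
  have e3: "n+3 = Suc (n+2)" by simp
  have e4: "p^(n+2) * p = p^(n+3)" by (simp only: e3 power_Suc2)
  have "p^(n+4) = p^((n+2)+2)" by (simp only: e)
  also have "\<dots> = p^(n+2) * p^2" by (rule power_add)
  also have "\<dots> = p^(n+2) * p + p^(n+2)" by (simp add: sq distrib_left)
  also have "\<dots> = p^(n+3) + p^(n+2)" by (simp only: e4)
  finally have "p^(n+4) / p^3 = (p^(n+3) + p^(n+2)) / p^3" by simp
  also have "\<dots> = p^(n+3) / p^3 + p^(n+2) / p^3" by (rule add_divide_distrib)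
  also have "\<dots> \<le> real (card (G (n+3))) + real (card (G (n+2)))" using ih1 ih2 by simp
  also have "\<dots> \<le> real (card (G (n+4)))" using card_G_rec[of n] by linarith
  finally have "PG (n+4)" unfolding PG_def p_def .
  moreover have e1: "Suc n + 2 = n + 3" by simp
  moreover have e2: "Suc n + 3 = n + 4" by simp
  ultimately show ?case using Suc.IH by (simp only: e1 e2)
qed

theorem theorem2p8:
  shows "(\<lambda>n. real (num_stable_cycle n)) \<in> \<Theta>(\<lambda>n. ((1 + sqrt 5) / 2) ^ n)"
proof (rule bigthetaI'[of "1 / ((1 + sqrt 5) / 2) ^ 3" 4])
  have p1: "(1::real) < (1 + sqrt 5) / 2" by (rule phi_gt1)
  then have "0 < (1 + sqrt 5) / (2::real)" by linarith
  then show "0 < 1 / ((1 + sqrt 5) / 2) ^ 3" by simp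
  show "(0::real) < 4" by simp
  show "\<forall>\<^sub>F x in at_top. 1 / ((1 + sqrt 5) / 2) ^ 3 * norm (((1 + sqrt 5) / 2) ^ x) \<le> norm (real (num_stable_cycle x)) \<and>
        norm (real (num_stable_cycle x)) \<le> 4 * norm (((1 + sqrt 5) / 2) ^ x)"
    unfolding eventually_at_top_linorder
  proof (intro exI[of _ 3] allI impI)
    fix n :: nat assume n: "3 \<le> n"
    have pos: "0 < ((1 + sqrt 5) / 2 :: real) ^ n" using p1 by (intro zero_less_power) linarith
    have up: "real (card (T n)) \<le> 4 * ((1 + sqrt 5) / 2) ^ n"
    proof -
      have "PT (n-1+1)" using T_upper by blast
      moreover have "n-1+1 = n" using n by simp
      ultimately have "PT n" by simp
      then show ?thesis unfolding PT_def .
    qed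
    have lo: "((1 + sqrt 5) / 2) ^ n / ((1 + sqrt 5) / 2) ^ 3 \<le> real (card (G n))"
    proof -
      have "PG (n-2+2)" using G_lower by blast
      moreover have "n-2+2 = n" using n by simp
      ultimately have "PG n" by simp
      then show ?thesis unfolding PG_def .
    qed
    have "real (num_stable_cycle n) \<le> real (card (T n))" using num_upper[OF n] by simp
    moreover have "real (card (G n)) \<le> real (num_stable_cycle n)" using num_lower[OF n] by simp
    ultimately show "1 / ((1 + sqrt 5) / 2) ^ 3 * norm (((1 + sqrt 5) / 2) ^ n) \<le> norm (real (num_stable_cycle n)) \<and>
        norm (real (num_stable_cycle n)) \<le> 4 * norm (((1 + sqrt 5) / 2) ^ n :: real)"
      using up lo pos by simp
  qed
qed

end
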